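(* There is an absolute constant $C > 0$ such that for every $L \geq 2$, $m \geq 1$, $k^* \in [m]$, $i \in \{0, \ldots, L\}$, $k \in [m]$ and $\lambda \in [m]^{L+1}$, every state $\tau$ on the path $\gamma_{\lambda, \lambda_{[i,k]}}$ differs from $\lambda$ in at most $C\log L$ coordinates and differs from $\lambda_{[i,k]}$ in at most $C\log L$ coordinates.
   Context: States are $\lambda = (\lambda_0,\ldots,\lambda_L) \in [m]^{L+1}$; coordinate $\ell$ is level $\ell$. $\lambda_{[i,k]}$ is $\lambda$ with the level-$i$ entry replaced by $k$. The procedure $\mathbf{Swap}(a,b)$ ($0\le a\le b\le L$): if $b - a \leq 1$, perform the single elementary operation exchanging the entries at levels $a$ and $b$; otherwise with $h = \lfloor (a+b)/2 \rfloor$ perform $\mathbf{Swap}(a,h)$, then $\mathbf{Swap}(h,b)$, then $\mathbf{Swap}(a,h)$. The path $\gamma_{\lambda,\lambda_{[i,k]}}$ (with $k^*$ a fixed element of $[m]$; in the paper a maximizer of $\pi_L(A_k)$) starts at $\lambda$ and performs in order: (1) set the level-0 entry to $k^*$; (2) $\mathbf{Swap}(0,i)$; (3) set the level-0 entry to $k$; (4) $\mathbf{Swap}(0,i)$; (5) set the level-0 entry to $\lambda_0$. The path is the sequence of states consisting of $\lambda$ and the state after each elementary operation. Two states differ in coordinate $\ell$ if their level-$\ell$ entries are unequal. *)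

theory Defs
  imports Complex_Main
begin

text \<open>A state is a function from levels to values; only levels 0..L are relevant.\<close>
type_synonym state = "nat \<Rightarrow> nat"

datatype elem_op = SetZero nat | Exch nat nat

fun apply_op :: "elem_op \<Rightarrow> state \<Rightarrow> state" where
  "apply_op (SetZero v) s = s(0 := v)"
| "apply_op (Exch a b) s = s(a := s b, b := s a)"

function swap_ops :: "nat \<Rightarrow> nat \<Rightarrow> elem_op list" where
  "swap_ops a b =
     (if b - a \<le> 1 then [Exch a b]
      else (let h = (a + b) div 2 in swap_ops a h @ swap_ops h b @ swap_ops a h))"
  by pat_completeness auto
termination
  by (relation "measure (\<lambda>(a, b). b - a)") auto

fun run :: "state \<Rightarrow> elem_op list \<Rightarrow> state list" where
  "run s [] = [s]"
| "run s (op1 # os) = s # run (apply_op op1 s) os"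

definition path_ops :: "nat \<Rightarrow> state \<Rightarrow> nat \<Rightarrow> nat \<Rightarrow> elem_op list" where
  "path_ops kstar lam i k =
     [SetZero kstar] @ swap_ops 0 i @ [SetZero k] @ swap_ops 0 i @ [SetZero (lam 0)]"

definition gamma_path :: "nat \<Rightarrow> state \<Rightarrow> nat \<Rightarrow> nat \<Rightarrow> state list" where
  "gamma_path kstar lam i k = run lam (path_ops kstar lam i k)"

definition ndiff :: "nat \<Rightarrow> state \<Rightarrow> state \<Rightarrow> nat" where
  "ndiff L s t = card {l \<in> {0..L}. s l \<noteq> t l}"

end

theory Submission
  imports Defs
begin

lemma run_hd: "s \<in> set (run s xs)"
  by (cases xs) auto

lemma run_append:
  "set (run s (xs @ ys)) = set (run s xs) \<union> set (run (fold apply_op xs s) ys)"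
  by (induction xs arbitrary: s) (auto simp: run_hd)

declare swap_ops.simps[simp del]

lemma swap_base: "b - a \<le> 1 \<Longrightarrow> swap_ops a b = [Exch a b]"
  by (rule trans[OF swap_ops.simps]) simp

lemma swap_rec: "\<not> b - a \<le> 1 \<Longrightarrow> swap_ops a b =
   swap_ops a ((a + b) div 2) @ swap_ops ((a + b) div 2) b @ swap_ops a ((a + b) div 2)"
  by (rule trans[OF swap_ops.simps]) (simp add: Let_def)

lemma swap_final: "fold apply_op (swap_ops a b) s = s(a := s b, b := s a)"
proof (induction a b arbitrary: s rule: swap_ops.induct)
  case (1 a b)
  show ?case
  proof (cases "b - a \<le> 1")
    case True
    then show ?thesis by (simp add: swap_base fun_eq_iff)
  next
    case False
    define h where "h = (a + b) div 2"
    have ah: "a < h" "h < b" using False unfolding h_def by auto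
    have "fold apply_op (swap_ops a b) s
      = fold apply_op (swap_ops a h) (fold apply_op (swap_ops h b) (fold apply_op (swap_ops a h) s))"
      using False by (simp add: swap_rec h_def)
    also have "\<dots> = s(a := s b, b := s a)"
      using "1.IH"[OF False refl] "1.IH"(2-)[OF False refl] ah unfolding h_def[symmetric]
      by (auto simp: fun_eq_iff)
    finally show ?thesis .
  qed
qed

lemma ndiff_tri: "ndiff L t u \<le> ndiff L t s + ndiff L s u"
proof -
  have "{l \<in> {0..L}. t l \<noteq> u l} \<subseteq> {l \<in> {0..L}. t l \<noteq> s l} \<union> {l \<in> {0..L}. s l \<noteq> u l}"
    by auto
  then have "card {l \<in> {0..L}. t l \<noteq> u l} \<le> card ({l \<in> {0..L}. t l \<noteq> s l} \<union> {l \<in> {0..L}. s l \<noteq> u l})"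
    by (intro card_mono) auto
  also have "\<dots> \<le> card {l \<in> {0..L}. t l \<noteq> s l} + card {l \<in> {0..L}. s l \<noteq> u l}"
    by (rule card_Un_le)
  finally show ?thesis unfolding ndiff_def .
qed

lemma ndiff_sym: "ndiff L t s = ndiff L s t"
  unfolding ndiff_def by metis

lemma ndiff_sub: assumes "\<And>l. l \<notin> A \<Longrightarrow> t l = s l" and that: "finite A" shows "ndiff L t s \<le> card A"
proof -
  have "{l \<in> {0..L}. t l \<noteq> s l} \<subseteq> A" using assms by auto
  then show ?thesis unfolding ndiff_def using that by (intro card_mono) auto
qed

lemma ndiff_upd: "ndiff L (s(a := x)) s \<le> 1"
  using ndiff_sub[of "{a}"] by fastforce

lemma ndiff_upd2: "ndiff L (s(a := x, b := y)) s \<le> 2"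
proof -
  have "ndiff L (s(a := x, b := y)) s \<le> card {a, b}"
    by (rule ndiff_sub) auto
  also have "\<dots> \<le> 2" by (simp add: card_insert_le_m1)
  finally show ?thesis .
qed

lemma ndiff_upd3: "ndiff L (s(a := x, b := y, c := z)) s \<le> 3"
proof -
  have "ndiff L (s(a := x, b := y, c := z)) s \<le> card {a, b, c}"
    by (rule ndiff_sub) auto
  also have "\<dots> \<le> 3" by (simp add: card_insert_le_m1)
  finally show ?thesis .
qed

lemma swap_states:
  "b - a \<le> 2 ^ k \<Longrightarrow> t \<in> set (run s (swap_ops a b)) \<Longrightarrow> ndiff L t s \<le> 3 * k + 2"
proof (induction a b arbitrary: s t k rule: swap_ops.induct)
  case (1 a b)
  show ?case
  proof (cases "b - a \<le> 1")
    case True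
    then have "swap_ops a b = [Exch a b]" by (rule swap_base)
    then have "t = s \<or> t = s(a := s b, b := s a)" using "1.prems"(2)
      by auto
    then show ?thesis using ndiff_upd2[of L s a "s b" b "s a"]
      by (auto simp: ndiff_def)
  next
    case False
    define h where "h = (a + b) div 2"
    have ah: "a < h" "h < b" using False unfolding h_def by auto
    obtain j where kj: "k = Suc j" using False "1.prems"(1)
      by (cases k) auto
    have hb1: "h - a \<le> 2 ^ j" "b - h \<le> 2 ^ j" using "1.prems"(1) kj unfolding h_def by auto
    define s1 where "s1 = fold apply_op (swap_ops a h) s"
    define s2 where "s2 = fold apply_op (swap_ops h b) s1"
    have s1: "s1 = s(a := s h, h := s a)" unfolding s1_def by (rule swap_final)
    have s2: "s2 = s(a := s h, h := s b, b := s a)" unfolding s2_def s1 swap_final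
      using ah by (auto simp: fun_eq_iff)
    have d1: "ndiff L s1 s \<le> 2" unfolding s1 by (rule ndiff_upd2)
    have d2: "ndiff L s2 s \<le> 3" unfolding s2 by (rule ndiff_upd3)
    have "set (run s (swap_ops a b)) = set (run s (swap_ops a h)) \<union> set (run s1 (swap_ops h b))
        \<union> set (run s2 (swap_ops a h))"
      using False unfolding swap_rec[OF False] h_def[symmetric] by (simp add: run_append s1_def s2_def
          Un_assoc)
    then consider "t \<in> set (run s (swap_ops a h))" | "t \<in> set (run s1 (swap_ops h b))"
      | "t \<in> set (run s2 (swap_ops a h))" using "1.prems"(2) by auto
    then show ?thesis
    proof cases
      case 1
      then show ?thesis using "1.IH"(1)[OF False h_def hb1(1)] kj by fastforce
    next
      case 2
      then have "ndiff L t s1 \<le> 3 * j + 2" using "1.IH"(2)[OF False h_def hb1(2)] by blast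
      then show ?thesis using ndiff_tri[of L t s s1] d1 kj by simp
    next
      case 3
      then have "ndiff L t s2 \<le> 3 * j + 2" using "1.IH"(3)[OF False h_def hb1(1)] by blast
      then show ?thesis using ndiff_tri[of L t s s2] d2 kj by simp
    qed
  qed
qed


lemma ndiff_two:
  assumes "\<And>l. l \<noteq> 0 \<Longrightarrow> l \<noteq> i \<Longrightarrow> t l = s l"
  shows "ndiff L t s \<le> 2"
proof -
  have "ndiff L t s \<le> card {0, i}" by (rule ndiff_sub) (use assms in auto)
  also have "\<dots> \<le> 2" by (simp add: card_insert_le_m1)
  finally show ?thesis .
qed

lemma path_bound:
  assumes "i \<le> 2 ^ k" and "\<tau> \<in> set (gamma_path kstar lam i kk)"
  shows "ndiff L \<tau> lam \<le> 3 * k + 4 \<and> ndiff L \<tau> (lam(i := kk)) \<le> 3 * k + 5"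
proof -
  define s1 where "s1 = lam(0 := kstar)"
  define s2 where "s2 = fold apply_op (swap_ops 0 i) s1"
  define s3 where "s3 = s2(0 := kk)"
  define s4 where "s4 = fold apply_op (swap_ops 0 i) s3"
  define s5 where "s5 = s4(0 := lam 0)"
  have s2e: "s2 = s1(0 := s1 i, i := s1 0)" unfolding s2_def by (rule swap_final)
  have s4e: "s4 = s3(0 := s3 i, i := s3 0)" unfolding s4_def by (rule swap_final)
  have "set (gamma_path kstar lam i kk) = {lam} \<union> (set (run s1 (swap_ops 0 i)) \<union>
      ({s2} \<union> (set (run s3 (swap_ops 0 i)) \<union> {s4, s5})))"
    unfolding gamma_path_def path_ops_def
    unfolding s1_def s2_def s3_def s4_def s5_def by (simp add: run_append) blast
  then consider "\<tau> = lam" | "\<tau> \<in> set (run s1 (swap_ops 0 i))" | "\<tau> = s2"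
    | "\<tau> \<in> set (run s3 (swap_ops 0 i))" | "\<tau> = s4" | "\<tau> = s5"
    using assms(2) by auto
  then have A: "ndiff L \<tau> lam \<le> 3 * k + 4"
  proof cases
    case 1 then show ?thesis by (simp add: ndiff_def)
  next
    case 2
    have "ndiff L \<tau> s1 \<le> 3 * k + 2" using swap_states[where a=0 and b=i and k=k and t=\<tau> and s=s1 and L=L] 2 assms(1) by simp
    moreover have "ndiff L s1 lam \<le> 1" unfolding s1_def by (rule ndiff_upd)
    ultimately show ?thesis using ndiff_tri[of L \<tau> lam s1] by simp
  next
    case 3 then show ?thesis using ndiff_two[of i \<tau> lam L] by (simp add: s2e s1_def)
  next
    case 4
    have "ndiff L \<tau> s3 \<le> 3 * k + 2" using swap_states[where a=0 and b=i and k=k and t=\<tau> and s=s3 and L=L] 4 assms(1) by simp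
    moreover have "ndiff L s3 lam \<le> 2" by (rule ndiff_two[of i]) (simp add: s3_def s2e s1_def)
    ultimately show ?thesis using ndiff_tri[of L \<tau> lam s3] by simp
  next
    case 5 then show ?thesis using ndiff_two[of i \<tau> lam L] by (simp add: s4e s3_def s2e s1_def)
  next
    case 6 then show ?thesis using ndiff_two[of i \<tau> lam L]
      by (simp add: s5_def s4e s3_def s2e s1_def)
  qed
  moreover have "ndiff L lam (lam(i := kk)) \<le> 1"
    using ndiff_upd[of L lam i kk] ndiff_sym by metis
  ultimately show ?thesis using ndiff_tri[of L \<tau> "lam(i := kk)" lam] by simp
qed

lemma log_bound:
  assumes "(L::nat) \<ge> 2"
  shows "\<exists>k. L \<le> 2 ^ k \<and> real (3 * k + 5) \<le> (11 / ln 2) * ln (real L)"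
proof -
  have ex: "\<exists>k. L \<le> 2 ^ k" using less_exp[of L] by (meson less_imp_le)
  define k where "k = (LEAST k. L \<le> 2 ^ k)"
  have Lk: "L \<le> 2 ^ k" unfolding k_def by (rule LeastI_ex[OF ex])
  have l2: "ln 2 > (0::real)" by simp
  have lnL: "ln (real L) \<ge> ln 2" using assms by simp
  have key: "real k - 1 \<le> ln (real L) / ln 2"
  proof (cases k)
    case 0
    have "0 \<le> ln (real L) / ln 2" using lnL l2 by (intro divide_nonneg_pos) (linarith, assumption)
    with 0 show ?thesis by simp
  next
    case (Suc j)
    have "\<not> L \<le> 2 ^ j" unfolding k_def using Suc k_def not_less_Least by (metis lessI)
    then have "real (2 ^ j) < real L" by simp
    then have "ln (real (2 ^ j)) < ln (real L)" by (subst ln_less_cancel_iff) auto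
    then have "real j * ln 2 < ln (real L)" by (simp add: ln_realpow)
    then have "real j \<le> ln (real L) / ln 2" using l2 by (simp add: divide_simps)
    then show ?thesis using Suc by simp
  qed
  have one: "1 \<le> ln (real L) / ln 2" using lnL l2 by (simp add: divide_simps)
  have "real (3 * k + 5) = 3 * (real k - 1) + 8" by simp
  also have "\<dots> \<le> 3 * (ln (real L) / ln 2) + 8 * (ln (real L) / ln 2)"
    using key one by (intro add_mono mult_left_mono; simp only: ; fail)+
  also have "\<dots> = (11 / ln 2) * ln (real L)" by simp
  finally show ?thesis using Lk by blast
qed

theorem lemma4:
  shows "\<exists>C::real. C > 0 \<and>
    (\<forall>L m kstar i k (lam::state).
       L \<ge> 2 \<longrightarrow> m \<ge> 1 \<longrightarrow> kstar \<in> {1..m} \<longrightarrow> i \<le> L \<longrightarrow> k \<in> {1..m} \<longrightarrow>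
       (\<forall>l\<le>L. lam l \<in> {1..m}) \<longrightarrow>
       (\<forall>\<tau> \<in> set (gamma_path kstar lam i k).
          real (ndiff L \<tau> lam) \<le> C * ln (real L) \<and>
          real (ndiff L \<tau> (lam(i := k))) \<le> C * ln (real L)))"
proof (intro exI[of _ "11 / ln 2"] conjI allI impI ballI)
  show "0 < 11 / ln (2::real)" by simp
next
  fix L m kstar i k and lam :: state and \<tau>
  assume L: "L \<ge> 2" and iL: "i \<le> L" and t: "\<tau> \<in> set (gamma_path kstar lam i k)"
  obtain kk where kk: "L \<le> 2 ^ kk" "real (3 * kk + 5) \<le> (11 / ln 2) * ln (real L)"
    using log_bound[OF L] by blast
  have b: "ndiff L \<tau> lam \<le> 3 * kk + 4 \<and> ndiff L \<tau> (lam(i := k)) \<le> 3 * kk + 5"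
    using path_bound[of i kk \<tau> kstar lam k L] kk(1) iL t by simp
  then have "real (ndiff L \<tau> lam) \<le> real (3 * kk + 5)"
       "real (ndiff L \<tau> (lam(i := k))) \<le> real (3 * kk + 5)" by simp_all
  then show "real (ndiff L \<tau> lam) \<le> 11 / ln 2 * ln (real L)"
       "real (ndiff L \<tau> (lam(i := k))) \<le> 11 / ln 2 * ln (real L)" using kk(2) by linarith+
qed

end
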